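(* Let $\mathcal{S}$ be a nonempty semigroup with operation $*$, and let $E(\mathcal{S})$ be its set of idempotents. Suppose $|\mathcal{S}\setminus E(\mathcal{S})|$ is finite. Then every $\mathcal{S}$-valued sequence $T=a_1a_2\cdots a_{\ell}$ of length $\ell=|\mathcal{S}\setminus E(\mathcal{S})|+1$ is not strongly idempotent-product free; that is, there exist indices $1\le i_1<i_2<\cdots<i_t\le \ell$ with $t\ge 1$ such that $a_{i_1}*a_{i_2}*\cdots*a_{i_t}\in E(\mathcal{S})$.
   Context: An element $x$ of a semigroup $\mathcal{S}$ is an idempotent if $x*x=x$. A sequence means a finite ordered list of (not necessarily distinct) elements of $\mathcal{S}$; a subsequence keeps terms in their original order. A sequence is strongly idempotent-product free if no nonempty subsequence has product (taken in the natural order of the sequence) equal to an idempotent. *)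

theory Defs
  imports Main
begin

definition idempotent :: "'a::semigroup_mult \<Rightarrow> bool" where
  "idempotent x \<longleftrightarrow> x * x = x"

fun sprod :: "'a::semigroup_mult list \<Rightarrow> 'a" where
  "sprod [] = undefined"
| "sprod (x # xs) = foldl (*) x xs"

definition strongly_idempotent_product_free :: "'a::semigroup_mult list \<Rightarrow> bool" where
  "strongly_idempotent_product_free T \<longleftrightarrow>
     (\<forall>I. I \<noteq> {} \<and> I \<subseteq> {..<length T} \<longrightarrow> \<not> idempotent (sprod (nths T I)))"

end

theory Submission
  imports Defs
begin

fun spow :: "'a::semigroup_mult \<Rightarrow> nat \<Rightarrow> 'a" where
  "spow a 0 = a"
| "spow a (Suc n) = spow a n * a"

lemma spow_add: "spow a m * spow a n = spow a (m + n + 1)"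
  by (induction n) (auto simp: mult.assoc[symmetric])

lemma spow_per:
  assumes "spow a (m + d) = spow a m" "m \<le> n"
  shows "spow a (n + d) = spow a n"
  using assms(2)
proof (induction n rule: dec_induct)
  case base then show ?case using assms(1) by simp
next
  case (step n) then show ?case by simp
qed

lemma spow_per_mult:
  assumes "spow a (m + d) = spow a m" "m \<le> n"
  shows "spow a (n + k * d) = spow a n"
proof (induction k)
  case 0 then show ?case by simp
next
  case (Suc k)
  have "spow a (n + Suc k * d) = spow a ((n + k * d) + d)" by (simp add: algebra_simps)
  also have "\<dots> = spow a (n + k*d)" by (rule spow_per[OF assms(1)]) (use assms(2) in simp)
  finally show ?case using Suc by simp
qed

lemma spow_idem:
  assumes "finite R" "\<And>n. spow a n \<in> R"
  shows "\<exists>n. idempotent (spow a n)"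
proof -
  have "\<not> inj (spow a)"
  proof
    assume "inj (spow a)"
    then have "infinite (range (spow a))" using finite_imageD by blast
    moreover have "range (spow a) \<subseteq> R" using assms(2) by auto
    ultimately show False using assms(1) finite_subset by blast
  qed
  then obtain x y where xy: "x \<noteq> y" "spow a x = spow a y" unfolding inj_def by blast
  then obtain m d where md: "d \<ge> 1" "spow a (m + d) = spow a m"
  proof (cases "x < y")
    case True then show ?thesis using that[of "y - x" x] xy by simp
  next
    case False then have "y < x" using xy(1) by simp
    then show ?thesis using that[of "x - y" y] xy by simp
  qed
  define n where "n = (m+1)*d - 1"
  have "m + 1 \<le> (m+1)*d" using md(1) mult_le_mono2[of 1 d "m+1"] by simp
  then have nm: "m \<le> n" unfolding n_def by linarith
  have "n + 1 = (m+1)*d" unfolding n_def using \<open>m + 1 \<le> (m+1)*d\<close> by linarith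
  have "spow a n * spow a n = spow a (n + (m+1)*d)"
  proof -
    have "spow a n * spow a n = spow a (n + (n + 1))" using spow_add[of a n n] by (simp only: add.assoc)
    then show ?thesis by (simp only: \<open>n + 1 = (m+1)*d\<close>)
  qed
  also have "\<dots> = spow a n" by (rule spow_per_mult[OF md(2) nm, of "m+1"])
  finally show ?thesis unfolding idempotent_def by blast
qed

definition P :: "'a::semigroup_mult list \<Rightarrow> 'a set" where
  "P T = {sprod (nths T I) | I. I \<noteq> {} \<and> I \<subseteq> {..<length T}}"

lemma sprod_snoc: "xs \<noteq> [] \<Longrightarrow> sprod (xs @ [a]) = sprod xs * a"
  by (cases xs) auto

lemma nths_cong2: "(\<And>i. i < length xs \<Longrightarrow> (i \<in> A) = (i \<in> B)) \<Longrightarrow> nths xs A = nths xs B"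
proof (induction xs arbitrary: A B)
  case Nil then show ?case by simp
next
  case (Cons x xs)
  have "nths xs {j. Suc j \<in> A} = nths xs {j. Suc j \<in> B}"
    by (rule Cons.IH) (use Cons.prems in auto)
  moreover have "(0 \<in> A) = (0 \<in> B)" using Cons.prems by simp
  ultimately show ?case by (simp add: nths_Cons)
qed

lemma nths_snoc_sub: "I \<subseteq> {..<length xs} \<Longrightarrow> nths (xs @ [a]) I = nths xs I"
proof -
  assume I: "I \<subseteq> {..<length xs}"
  have "0 \<notin> {j. j + length xs \<in> I}" using I by auto
  then show ?thesis by (simp only: nths_append nths_singleton if_False append_Nil2)
qed

lemma nths_snoc_ins: "I \<subseteq> {..<length xs} \<Longrightarrow> nths (xs @ [a]) (insert (length xs) I) = nths xs I @ [a]"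
proof -
  assume I: "I \<subseteq> {..<length xs}"
  have "nths xs (insert (length xs) I) = nths xs I"
    by (rule nths_cong2) auto
  moreover have "{j. j + length xs \<in> insert (length xs) I} = {0}" using I by auto
  ultimately show ?thesis by (simp add: nths_append nths_singleton)
qed


lemma free_snoc:
  "strongly_idempotent_product_free (xs @ [a]) \<Longrightarrow> strongly_idempotent_product_free xs"
  unfolding strongly_idempotent_product_free_def
proof (intro allI impI)
  fix I assume H: "\<forall>I. I \<noteq> {} \<and> I \<subseteq> {..<length (xs @ [a])} \<longrightarrow> \<not> idempotent (sprod (nths (xs @ [a]) I))"
    and I: "I \<noteq> {} \<and> I \<subseteq> {..<length xs}"
  have "{..<length xs} \<subseteq> {..<length (xs @ [a])}" by auto
  then have "I \<noteq> {} \<and> I \<subseteq> {..<length (xs @ [a])}" using I by (meson order_trans)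
  then have "\<not> idempotent (sprod (nths (xs @ [a]) I))" using H by (elim allE impE)
  moreover have "nths (xs @ [a]) I = nths xs I" using I by (intro nths_snoc_sub) simp
  ultimately show "\<not> idempotent (sprod (nths xs I))" by simp
qed

lemma P_noid: "strongly_idempotent_product_free T \<Longrightarrow> P T \<subseteq> {x. \<not> idempotent x}"
proof
  fix x assume f: "strongly_idempotent_product_free T" and "x \<in> P T"
  then obtain I where "I \<noteq> {}" "I \<subseteq> {..<length T}" "x = sprod (nths T I)" unfolding P_def by blast
  then show "x \<in> {x. \<not> idempotent x}" using f unfolding strongly_idempotent_product_free_def by blast
qed

lemma main:
  assumes fin: "finite {x::'a::semigroup_mult. \<not> idempotent x}"
  shows "strongly_idempotent_product_free (T::'a list) \<Longrightarrow> card (P T) \<ge> length T"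
proof (induction T rule: rev_induct)
  case Nil then show ?case by simp
next
  case (snoc a xs)
  have fx: "strongly_idempotent_product_free xs" using free_snoc[OF snoc.prems] .
  have IH: "length xs \<le> card (P xs)" using snoc.IH[OF fx] .
  have finB: "finite (P (xs @ [a]))"
    by (rule finite_subset[OF P_noid[OF snoc.prems] fin])
  have sub: "P xs \<subseteq> P (xs @ [a])"
  proof
    fix r assume "r \<in> P xs"
    then obtain I where "I \<noteq> {}" "I \<subseteq> {..<length xs}" "r = sprod (nths xs I)" unfolding P_def by blast
    then have "r = sprod (nths (xs @ [a]) I)" "I \<subseteq> {..<length (xs @ [a])}"
      using nths_snoc_sub[of I xs a] by auto
    then show "r \<in> P (xs @ [a])" unfolding P_def using \<open>I \<noteq> {}\<close> by blast
  qed
  have aB: "a \<in> P (xs @ [a])"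
  proof -
    have "nths (xs @ [a]) {length xs} = [a]" using nths_snoc_ins[of "{}" xs a] by simp
    then have "a = sprod (nths (xs @ [a]) {length xs})" by simp
    moreover have "{length xs} \<subseteq> {..<length (xs @ [a])}" by auto
    ultimately show ?thesis unfolding P_def by blast
  qed
  have mulB: "r * a \<in> P (xs @ [a])" if "r \<in> P xs" for r
  proof -
    from that obtain I where I: "I \<noteq> {}" "I \<subseteq> {..<length xs}" "r = sprod (nths xs I)"
      unfolding P_def by blast
    obtain i where i: "i \<in> I" using I(1) by (meson ex_in_conv)
    have il: "i < length xs" using I(2) i by (simp add: subset_iff)
    have "xs ! i \<in> set (nths xs I)" unfolding set_nths using il i by blast
    then have ne: "nths xs I \<noteq> []" by (cases "nths xs I") simp_all
    define J where "J = insert (length xs) I"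
    have "r * a = sprod (nths (xs @ [a]) J)"
      unfolding J_def nths_snoc_ins[OF I(2)] sprod_snoc[OF ne] I(3) ..
    moreover have "J \<subseteq> {..<length (xs @ [a])}" using I(2) unfolding J_def by auto
    moreover have "J \<noteq> {}" unfolding J_def by simp
    ultimately show ?thesis unfolding P_def by blast
  qed
  show ?case
  proof (rule ccontr)
    assume "\<not> length (xs @ [a]) \<le> card (P (xs @ [a]))"
    moreover have "card (P xs) \<le> card (P (xs @ [a]))" using card_mono[OF finB sub] .
    ultimately have "card (P (xs @ [a])) = card (P xs)" using IH by simp
    then have eq: "P xs = P (xs @ [a])" using card_subset_eq[OF finB sub] by simp
    have sp: "spow a n \<in> P xs" for n
    proof (induction n)
      case 0 then show ?case using aB eq by simp
    next
      case (Suc n) then show ?case using mulB[OF Suc] eq by simp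
    qed
    have fP: "finite (P xs)" using finB eq by simp
    obtain n where idn: "idempotent (spow a n)"
      using spow_idem[of "P xs" a, OF fP sp] by (elim exE)
    have "spow a n \<in> P (xs @ [a])" by (simp only: eq[symmetric] sp)
    then have "spow a n \<in> {x. \<not> idempotent x}" by (rule subsetD[OF P_noid[OF snoc.prems]])
    then show False using idn by simp
  qed
qed

theorem proposition1p1:
  fixes T :: "'a::semigroup_mult list"
  assumes "finite {x::'a. \<not> idempotent x}"
    and "length T = card {x::'a. \<not> idempotent x} + 1"
  shows "\<not> strongly_idempotent_product_free T"
proof
  assume f: "strongly_idempotent_product_free T"
  have "card (P T) \<le> card {x::'a. \<not> idempotent x}"
    using card_mono[OF assms(1) P_noid[OF f]] .
  with main[OF assms(1) f] assms(2) show False by simp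
qed

end
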